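(* Let $n\ge1$, $1\le p\le q<\infty$ and $\alpha\in\mathbb{R}$, with $\alpha\le0$ if $p=q$. Then $SR_{p,q}\log^\alpha(\mathbb{R}^n)=M_{n(\frac1p-\frac1q),\alpha}L^q(\mathbb{R}^n)$.
   Context: $\mathcal{D}(\mathbb{R}^n)=\{2^{-k}(m+[0,1)^n):k\in\mathbb{Z},m\in\mathbb{Z}^n\}$. A countable $(Q_i)_{i\in I}\subset\mathcal{D}(\mathbb{R}^n)$ is sparse if there exist pairwise disjoint measurable $E_{Q_i}\subseteq Q_i$ with $|E_{Q_i}|\ge\frac12|Q_i|$; $S(\mathbb{R}^n)$ is the set of sparse families. $(a)_-=\min\{a,0\}$, natural logarithm, $p'$ dual exponent. $SR_{p,q}\log^\alpha(\mathbb{R}^n)$ is the set of $f\in L^1_{\mathrm{loc}}(\mathbb{R}^n)$ with $\sup_{(Q_i)\in S(\mathbb{R}^n)}\big\{\sum_i\big[(1-(\log|Q_i|)_-)^\alpha|Q_i|^{-1/p'}\int_{Q_i}|f|\big]^q\big\}^{1/q}<\infty$. For $0\le\lambda<n$, $M_{\lambda,\alpha}f(x)=\sup_{Q\in\mathcal{D}(\mathbb{R}^n),\,x\in Q}|Q|^{\frac\lambda n-1}(1-(\log|Q|)_-)^\alpha\int_Q|f|$, and $M_{\lambda,\alpha}L^q(\mathbb{R}^n)=\{f\in L^1_{\mathrm{loc}}(\mathbb{R}^n):\|M_{\lambda,\alpha}f\|_{L^q(\mathbb{R}^n)}<\infty\}$. *)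

theory Defs
  imports "HOL-Analysis.Analysis"
begin

definition dyadic_cube :: "int \<Rightarrow> ('n::finite \<Rightarrow> int) \<Rightarrow> (real^'n) set" where
  "dyadic_cube k m = {x. \<forall>i. 2 powr (- real_of_int k) * real_of_int (m i) \<le> x $ i \<and>
                              x $ i < 2 powr (- real_of_int k) * (real_of_int (m i) + 1)}"

definition dyadic_cubes :: "(real^'n::finite) set set" where
  "dyadic_cubes = {dyadic_cube k m | k m. True}"

text \<open>A countable family (Q i) indexed by I (countable index sets reindexed into nat) is sparse.\<close>
definition sparse :: "nat set \<Rightarrow> (nat \<Rightarrow> (real^'n::finite) set) \<Rightarrow> bool" where
  "sparse I Q \<longleftrightarrow> (\<forall>i\<in>I. Q i \<in> dyadic_cubes) \<and>
     (\<exists>E. disjoint_family_on E I \<and>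
          (\<forall>i\<in>I. E i \<in> sets lebesgue \<and> E i \<subseteq> Q i \<and> measure lebesgue (E i) \<ge> measure lebesgue (Q i) / 2))"

definition loc_integrable :: "(real^'n::finite \<Rightarrow> real) \<Rightarrow> bool" where
  "loc_integrable f \<longleftrightarrow> (\<forall>K. compact K \<longrightarrow> set_integrable lebesgue K f)"

definition logw :: "real \<Rightarrow> (real^'n::finite) set \<Rightarrow> real" where
  "logw \<alpha> Q = (1 - min (ln (measure lebesgue Q)) 0) powr \<alpha>"

text \<open>|Q|^(-1/p') = |Q|^(1/p - 1), with p' the dual exponent of p (p' = \<infinity> for p = 1).\<close>
definition SR_term :: "real \<Rightarrow> real \<Rightarrow> real \<Rightarrow> (real^'n::finite \<Rightarrow> real) \<Rightarrow> (real^'n) set \<Rightarrow> real" where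
  "SR_term p q \<alpha> f Q = (logw \<alpha> Q * measure lebesgue Q powr (1/p - 1) *
                         (LINT x:Q|lebesgue. \<bar>f x\<bar>)) powr q"

definition SR_log :: "real \<Rightarrow> real \<Rightarrow> real \<Rightarrow> (real^'n::finite \<Rightarrow> real) set" where
  "SR_log p q \<alpha> = {f. loc_integrable f \<and>
      (SUP (I, Q) \<in> {(I, Q). sparse I Q}.
          (\<Sum>i. if i \<in> I then ennreal (SR_term p q \<alpha> f (Q i)) else 0)) < \<infinity>}"

definition max_op :: "real \<Rightarrow> real \<Rightarrow> (real^'n::finite \<Rightarrow> real) \<Rightarrow> real^'n \<Rightarrow> ennreal" where
  "max_op lam \<alpha> f x = (SUP Q \<in> {Q \<in> dyadic_cubes. x \<in> Q}.
      ennreal (measure lebesgue Q powr (lam / real CARD('n) - 1) * logw \<alpha> Q *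
               (LINT y:Q|lebesgue. \<bar>f y\<bar>)))"

definition enn_powr :: "ennreal \<Rightarrow> real \<Rightarrow> ennreal" where
  "enn_powr t q = (if t = \<infinity> then \<infinity> else ennreal (enn2real t powr q))"

definition max_Lq :: "real \<Rightarrow> real \<Rightarrow> real \<Rightarrow> (real^'n::finite \<Rightarrow> real) set" where
  "max_Lq lam \<alpha> q = {f. loc_integrable f \<and>
      (\<integral>\<^sup>+ x. enn_powr (max_op lam \<alpha> f x) q \<partial>lebesgue) < \<infinity>}"

end

theory Submission
  imports Defs
begin

lemma mem_dyadic_cube:
  "x \<in> dyadic_cube k m \<longleftrightarrow> (\<forall>i. m i = \<lfloor>2 powr (real_of_int k) * x $ i\<rfloor>)"
proof -
  have "2 powr (- real_of_int k) * real_of_int (m i) \<le> x $ i \<and>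
        x $ i < 2 powr (- real_of_int k) * (real_of_int (m i) + 1) \<longleftrightarrow>
        m i = \<lfloor>2 powr (real_of_int k) * x $ i\<rfloor>" for i
  proof -
    have p: "2 powr (real_of_int k) > 0" by simp
    have e: "2 powr (- real_of_int k) = inverse (2 powr (real_of_int k))"
      by (simp add: powr_minus)
    have "2 powr (- real_of_int k) * real_of_int (m i) \<le> x $ i \<longleftrightarrow> real_of_int (m i) \<le> 2 powr (real_of_int k) * x $ i"
      using p by (simp add: e field_simps)
    moreover have "x $ i < 2 powr (- real_of_int k) * (real_of_int (m i) + 1) \<longleftrightarrow> 2 powr (real_of_int k) * x $ i < real_of_int (m i) + 1"
      using p by (simp add: e field_simps)
    moreover have "m i = \<lfloor>2 powr (real_of_int k) * x $ i\<rfloor> \<longleftrightarrow> real_of_int (m i) \<le> 2 powr (real_of_int k) * x $ i \<and> 2 powr (real_of_int k) * x $ i < real_of_int (m i) + 1"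
      by (metis floor_eq_iff)
    ultimately show ?thesis by blast
  qed
  then show ?thesis unfolding dyadic_cube_def by auto
qed

lemma dyadic_cube_box:
  fixes m :: "'n::finite \<Rightarrow> int" and k :: int
  defines "a \<equiv> (\<chi> i. 2 powr (- real_of_int k) * real_of_int (m i)) :: real^'n"
  defines "b \<equiv> (\<chi> i. 2 powr (- real_of_int k) * (real_of_int (m i) + 1)) :: real^'n"
  shows "box a b \<subseteq> dyadic_cube k m" "dyadic_cube k m \<subseteq> cbox a b"
  unfolding dyadic_cube_def a_def b_def by (auto simp: mem_box_cart less_imp_le)

lemma dyadic_cube_sets [measurable]:
  fixes m :: "'n::finite \<Rightarrow> int"
  shows "dyadic_cube k m \<in> sets lebesgue"
proof -
  have "dyadic_cube k m = (\<Inter>i. {x. 2 powr (- real_of_int k) * real_of_int (m i) \<le> x $ i} \<inter> {x. x $ i < 2 powr (- real_of_int k) * (real_of_int (m i) + 1)})"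
    unfolding dyadic_cube_def by auto
  also have "\<dots> \<in> sets borel"
  proof -
    have "{x::real^'n. 2 powr (- real_of_int k) * real_of_int (m i) \<le> x $ i} \<in> sets borel" for i
      by (intro borel_closed closed_Collect_le continuous_intros)
    moreover have "{x::real^'n. x $ i < 2 powr (- real_of_int k) * (real_of_int (m i) + 1)} \<in> sets borel" for i
      by (intro borel_open open_Collect_less continuous_intros)
    ultimately show ?thesis by (intro sets.countable_INT') auto
  qed
  finally show ?thesis by auto
qed

lemma dyadic_cube_fmeasurable:
  fixes m :: "'n::finite \<Rightarrow> int"
  shows "dyadic_cube k m \<in> fmeasurable lebesgue"
  by (rule fmeasurableI2[OF lmeasurable_cbox dyadic_cube_box(2)[where m=m and k=k] dyadic_cube_sets])

lemma dyadic_cube_fin: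
  fixes m :: "'n::finite \<Rightarrow> int"
  shows "emeasure lebesgue (dyadic_cube k m) \<noteq> \<infinity>"
  using dyadic_cube_fmeasurable[of k m] unfolding fmeasurable_def by auto

lemma dyadic_emeasure:
  assumes "Q \<in> (dyadic_cubes :: (real^'n::finite) set set)"
  shows "emeasure lebesgue Q = ennreal (measure lebesgue Q)"
proof -
  obtain k m where Q: "Q = dyadic_cube k m" using assms by (auto simp: dyadic_cubes_def)
  have "emeasure lebesgue (dyadic_cube k m) \<noteq> top" using dyadic_cube_fin[of k m] by simp
  then show ?thesis unfolding Q by (rule emeasure_eq_ennreal_measure)
qed

lemma measure_dyadic_cube:
  "measure lebesgue (dyadic_cube k (m::'n::finite \<Rightarrow> int)) = 2 powr (- real_of_int k * real CARD('n))"
proof -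
  define a :: "real^'n" where "a = (\<chi> i. 2 powr (- real_of_int k) * real_of_int (m i))"
  define b :: "real^'n" where "b = (\<chi> i. 2 powr (- real_of_int k) * (real_of_int (m i) + 1))"
  have ab: "\<forall>i\<in>Basis. a \<bullet> i \<le> b \<bullet> i"
    by (auto simp: a_def b_def Basis_vec_def cart_eq_inner_axis[symmetric] inner_axis)
  have pc: "measure lborel (cbox a b) = (2 powr (- real_of_int k)) ^ CARD('n)"
  proof -
    have "measure lborel (cbox a b) = prod (\<lambda>i. b$i - a$i) UNIV"
      by (rule content_cbox_cart) (auto simp: box_ne_empty ab)
    also have "\<dots> = prod (\<lambda>i. 2 powr (- real_of_int k)) (UNIV :: 'n set)"
      by (simp add: a_def b_def algebra_simps)
    finally show ?thesis by simp
  qed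
  have pb: "measure lborel (box a b) = measure lborel (cbox a b)"
    by (simp add: measure_lborel_box_eq measure_lborel_cbox_eq ab)
  have "measure lebesgue (box a b) = measure lborel (box a b)"
    by (simp add: measure_completion)
  moreover have "measure lebesgue (cbox a b) = measure lborel (cbox a b)"
    by (simp add: measure_completion)
  moreover have "measure lebesgue (box a b) \<le> measure lebesgue (dyadic_cube k m)"
    using dyadic_cube_box(1)[where m=m and k=k]
    by (intro measure_mono_fmeasurable) (auto simp: a_def b_def dyadic_cube_fmeasurable)
  moreover have "measure lebesgue (dyadic_cube k m) \<le> measure lebesgue (cbox a b)"
    using dyadic_cube_box(2)[where m=m and k=k]
    by (intro measure_mono_fmeasurable) (auto simp: a_def b_def)
  ultimately have "measure lebesgue (dyadic_cube k m) = (2 powr (- real_of_int k)) ^ CARD('n)"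
    using pb pc by linarith
  also have "\<dots> = 2 powr (- real_of_int k * real CARD('n))"
    by (simp add: powr_realpow[symmetric] powr_powr)
  finally show ?thesis .
qed

lemma floor_level:
  "\<lfloor>2 powr (real_of_int k - real j) * y\<rfloor> = \<lfloor>2 powr real_of_int k * y\<rfloor> div 2^j"
proof -
  have e: "2 powr (real_of_int k - real j) * y = (2 powr real_of_int k * y) / real_of_int ((2::int)^j)"
    by (simp add: powr_diff powr_realpow)
  have "\<lfloor>(2 powr real_of_int k * y) / real_of_int ((2::int)^j)\<rfloor> = \<lfloor>2 powr real_of_int k * y\<rfloor> div 2^j"
    by (rule floor_divide_real_eq_div) simp
  then show ?thesis by (simp only: e)
qed

lemma cube_anc_sub:
  "dyadic_cube k m \<subseteq> dyadic_cube (k - int j) (\<lambda>i. m i div 2^j)"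
proof
  fix x assume "x \<in> dyadic_cube k m"
  then have "\<forall>i. m i = \<lfloor>2 powr real_of_int k * x $ i\<rfloor>" by (simp add: mem_dyadic_cube)
  then show "x \<in> dyadic_cube (k - int j) (\<lambda>i. m i div 2^j)"
    by (simp add: mem_dyadic_cube floor_level)
qed

lemma cube_nest_eq:
  assumes "x \<in> dyadic_cube k m" "x \<in> dyadic_cube k' m'" "k' \<le> k"
  shows "m' = (\<lambda>i. m i div 2^(nat (k - k')))"
proof
  fix i
  have e: "real_of_int k' = real_of_int k - real (nat (k - k'))" using assms(3) by simp
  have mi: "m' i = \<lfloor>2 powr real_of_int k' * x $ i\<rfloor>"
    using assms(2) by (simp add: mem_dyadic_cube)
  have "m' i = \<lfloor>2 powr (real_of_int k - real (nat (k - k'))) * x $ i\<rfloor>" using mi e by metis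
  also have "\<dots> = m i div 2^(nat (k - k'))"
    using assms(1) by (simp add: floor_level mem_dyadic_cube)
  finally show "m' i = m i div 2^(nat (k - k'))" .
qed

lemma cube_nest:
  assumes "x \<in> dyadic_cube k m" "x \<in> dyadic_cube k' m'" "k' \<le> k"
  shows "dyadic_cube k m \<subseteq> dyadic_cube k' m'"
proof -
  have "k' = k - int (nat (k - k'))" using assms(3) by simp
  then show ?thesis using cube_nest_eq[OF assms] cube_anc_sub[of k m "nat (k - k')"] by metis
qed

lemma corner_in_cube: "(\<chi> i. 2 powr (- real_of_int k) * real_of_int (m i)) \<in> dyadic_cube k m"
proof -
  have h: "2 powr real_of_int k * (2 powr (- real_of_int k) * y) = y" for y
    by (simp add: mult.assoc[symmetric] powr_add[symmetric])
  show ?thesis unfolding mem_dyadic_cube by (simp only: vec_lambda_beta h floor_of_int) simp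
qed

lemma dyadic_cube_ne: "dyadic_cube k m \<noteq> {}"
  using corner_in_cube by blast

lemma dyadic_cubesI [intro, simp]: "dyadic_cube k m \<in> dyadic_cubes"
  by (auto simp: dyadic_cubes_def)

lemma dyadic_cubesE:
  assumes "Q \<in> dyadic_cubes" obtains k m where "Q = dyadic_cube k m"
  using assms by (auto simp: dyadic_cubes_def)

lemma countable_dyadic_cubes: "countable (dyadic_cubes :: (real^'n::finite) set set)"
proof -
  have "dyadic_cubes = (\<lambda>(k, m::'n \<Rightarrow> int). dyadic_cube k m) ` UNIV"
    by (auto simp: dyadic_cubes_def)
  then show ?thesis using countable_image[of UNIV "\<lambda>(k, m::'n \<Rightarrow> int). dyadic_cube k m"] by simp
qed

lemma dyadic_nested_or_disjoint:
  assumes "Q \<in> dyadic_cubes" "Q' \<in> dyadic_cubes" "Q \<inter> Q' \<noteq> {}"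
  shows "Q \<subseteq> Q' \<or> Q' \<subseteq> Q"
proof -
  obtain k m where Q: "Q = dyadic_cube k m" using assms(1) by (rule dyadic_cubesE)
  obtain k' m' where Q': "Q' = dyadic_cube k' m'" using assms(2) by (rule dyadic_cubesE)
  obtain x where "x \<in> Q" "x \<in> Q'" using assms(3) by blast
  then show ?thesis unfolding Q Q'
    by (cases "k' \<le> k") (auto dest: cube_nest)
qed

lemma anc_mono:
  assumes "j \<le> j'"
  shows "dyadic_cube (k - int j) (\<lambda>i. m i div 2^j) \<subseteq> dyadic_cube (k - int j') (\<lambda>i. m i div 2^j')"
proof -
  have "dyadic_cube (k - int j) (\<lambda>i. m i div 2^j) \<subseteq>
        dyadic_cube (k - int j - int (j' - j)) (\<lambda>i. m i div 2^j div 2^(j' - j))"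
    by (rule cube_anc_sub)
  also have "(\<lambda>i. m i div 2^j div 2^(j' - j)) = (\<lambda>i. m i div 2^j')"
  proof
    fix i
    have "m i div 2^j div 2^(j' - j) = m i div (2^j * 2^(j'-j))"
      by (simp add: zdiv_zmult2_eq)
    also have "(2::int)^j * 2^(j'-j) = 2^j'" using assms by (simp add: power_add[symmetric])
    finally show "m i div 2^j div 2^(j' - j) = m i div 2^j'" .
  qed
  also have "k - int j - int (j' - j) = k - int j'" using assms by simp
  finally show ?thesis .
qed

lemma dyadic_super:
  assumes "Q' \<in> dyadic_cubes" "dyadic_cube k m \<subseteq> Q'"
  shows "\<exists>j. Q' = dyadic_cube (k - int j) (\<lambda>i. m i div 2^j)"
proof -
  obtain k' m' where Q': "Q' = dyadic_cube k' m'" using assms(1) by (rule dyadic_cubesE)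
  obtain x where x: "x \<in> dyadic_cube k m" using dyadic_cube_ne by blast
  then have x': "x \<in> Q'" using assms by blast
  show ?thesis
  proof (cases "k' \<le> k")
    case True
    then have "m' = (\<lambda>i. m i div 2^(nat (k - k')))" using x x' Q' cube_nest_eq by blast
    moreover have "k' = k - int (nat (k - k'))" using True by simp
    ultimately show ?thesis using Q' by metis
  next
    case False
    then have "Q' \<subseteq> dyadic_cube k m" using x x' Q' cube_nest by (metis linorder_linear)
    then have "Q' = dyadic_cube (k - int 0) (\<lambda>i. m i div 2^0)" using assms by auto
    then show ?thesis by blast
  qed
qed



lemma Lw_ge1: "1 \<le> 1 - min (ln s) (0::real)" by simp

lemma parent_real:
  fixes s c \<alpha> :: real
  assumes "0 < s" "1 \<le> c"
  shows "(1 - min (ln s) 0) powr \<alpha> \<le> (1 + ln c) powr (max \<alpha> 0) * (1 - min (ln (c * s)) 0) powr \<alpha>"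
proof -
  define Ls where "Ls = 1 - min (ln s) 0"
  define Lt where "Lt = 1 - min (ln (c * s)) 0"
  have lc: "0 \<le> ln c" using assms by simp
  have lcs: "ln (c * s) = ln c + ln s" using assms by (simp add: ln_mult)
  have Lt1: "1 \<le> Lt" by (simp add: Lt_def)
  have LsLt: "Lt \<le> Ls" using lcs lc by (simp add: Ls_def Lt_def)
  have Ls2: "Ls \<le> Lt + ln c" using lcs lc by (simp add: Ls_def Lt_def)
  also have "\<dots> \<le> (1 + ln c) * Lt" using Lt1 lc mult_right_mono[of 1 Lt "ln c"] by (simp add: algebra_simps)
  finally have Ls3: "Ls \<le> (1 + ln c) * Lt" .
  show ?thesis
  proof (cases "0 \<le> \<alpha>")
    case True
    have "Ls powr \<alpha> \<le> ((1 + ln c) * Lt) powr \<alpha>"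
      using True Ls3 Lt1 LsLt by (intro powr_mono2) auto
    also have "\<dots> = (1 + ln c) powr \<alpha> * Lt powr \<alpha>"
      using lc Lt1 by (simp add: powr_mult)
    finally show ?thesis using True by (simp add: Ls_def Lt_def)
  next
    case False
    have "Ls powr \<alpha> \<le> Lt powr \<alpha>"
      using False Lt1 LsLt by (intro powr_mono2') auto
    then show ?thesis using False lc by (simp add: Ls_def Lt_def)
  qed
qed

lemma qm_real:
  fixes a \<alpha> :: real
  assumes "0 \<le> a" "a = 0 \<longrightarrow> \<alpha> \<le> 0"
  shows "\<exists>C>0. \<forall>s t. 0 < s \<longrightarrow> s \<le> t \<longrightarrow>
     s powr a * (1 - min (ln s) 0) powr \<alpha> \<le> C * (t powr a * (1 - min (ln t) 0) powr \<alpha>)"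
proof (cases "\<alpha> \<le> 0")
  case True
  show ?thesis
  proof (intro exI[of _ 1] conjI allI impI)
    fix s t :: real assume st: "0 < s" "s \<le> t"
    have "s powr a \<le> t powr a" using st assms by (intro powr_mono2) auto
    moreover have "(1 - min (ln s) 0) powr \<alpha> \<le> (1 - min (ln t) 0) powr \<alpha>"
    proof -
      have "ln s \<le> ln t" using st by simp
      then have "1 - min (ln t) 0 \<le> 1 - min (ln s) 0" by auto
      then show ?thesis using powr_mono2'[OF True, of "1 - min (ln t) 0" "1 - min (ln s) 0"] by simp
    qed
    ultimately show "s powr a * (1 - min (ln s) 0) powr \<alpha> \<le> 1 * (t powr a * (1 - min (ln t) 0) powr \<alpha>)"
      by (simp add: mult_mono)
  qed simp
next
  case False
  then have a0: "0 < a" "0 < \<alpha>" using assms by auto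
  define N where "N = max 1 (\<alpha> / a)"
  have N1: "1 \<le> N" by (simp add: N_def)
  have Na: "\<alpha> / N \<le> a"
    using a0 N1 by (auto simp: N_def divide_le_eq max_def field_simps)
  show ?thesis
  proof (intro exI[of _ "N powr \<alpha>"] conjI allI impI)
    show "0 < N powr \<alpha>" using N1 by simp
    fix s t :: real assume st: "0 < s" "s \<le> t"
    define u where "u = max (- ln s) 0"
    define v where "v = max (- ln t) 0"
    define d where "d = u - v"
    have Ls: "1 - min (ln s) 0 = 1 + u" by (simp add: u_def)
    have Lt: "1 - min (ln t) 0 = 1 + v" by (simp add: v_def)
    have lnst: "ln s \<le> ln t" using st by simp
    have d0: "0 \<le> d" using lnst by (simp add: d_def u_def v_def)
    have d1: "d \<le> ln t - ln s" using lnst by (simp add: d_def u_def v_def max_def)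
    have v0: "0 \<le> v" by (simp add: v_def)
    have uv: "1 + u \<le> (1 + v) * (1 + d)" using d0 v0 mult_right_mono[of v u v] by (simp add: d_def algebra_simps)
    have e1: "1 + d \<le> N * exp (d / N)"
    proof -
      have "1 + d / N \<le> exp (d / N)" by (rule exp_ge_add_one_self)
      then have "N * (1 + d / N) \<le> N * exp (d / N)" using N1 by simp
      moreover have "N * (1 + d / N) = N + d" using N1 by (simp add: field_simps)
      ultimately show ?thesis using N1 by simp
    qed
    have "(1 + d) powr \<alpha> \<le> (N * exp (d / N)) powr \<alpha>"
      using e1 d0 a0 by (intro powr_mono2) auto
    also have "\<dots> = N powr \<alpha> * exp (\<alpha> * d / N)"
    proof -
      have "ln (N * exp (d / N)) = ln N + d / N" using N1 by (simp add: ln_mult)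
      then show ?thesis using N1 by (simp add: powr_def exp_add[symmetric] algebra_simps)
    qed
    also have "\<dots> \<le> N powr \<alpha> * exp (a * (ln t - ln s))"
    proof -
      have "\<alpha> * d / N = (\<alpha> / N) * d" by simp
      also have "\<dots> \<le> a * d" using Na d0 by (intro mult_right_mono) auto
      also have "\<dots> \<le> a * (ln t - ln s)" using d1 a0 by (intro mult_left_mono) auto
      finally show ?thesis using N1 by simp
    qed
    also have "exp (a * (ln t - ln s)) = t powr a / s powr a"
      using st by (simp add: powr_def exp_diff algebra_simps)
    finally have dd: "(1 + d) powr \<alpha> \<le> N powr \<alpha> * (t powr a / s powr a)" .
    have "s powr a * (1 + u) powr \<alpha> \<le> s powr a * ((1 + v) * (1 + d)) powr \<alpha>"
      using uv a0 d0 by (intro mult_left_mono powr_mono2) (auto simp: u_def)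
    also have "\<dots> = s powr a * (1 + v) powr \<alpha> * (1 + d) powr \<alpha>"
      using v0 d0 by (simp add: powr_mult)
    also have "\<dots> \<le> s powr a * (1 + v) powr \<alpha> * (N powr \<alpha> * (t powr a / s powr a))"
      using dd v0 by (intro mult_left_mono) auto
    also have "\<dots> = N powr \<alpha> * (t powr a * (1 + v) powr \<alpha>)"
      using st by (simp add: field_simps)
    finally show "s powr a * (1 - min (ln s) 0) powr \<alpha> \<le> N powr \<alpha> * (t powr a * (1 - min (ln t) 0) powr \<alpha>)"
      by (simp add: Ls Lt)
  qed
qed


lemma set_nn_abs:
  assumes "set_integrable lebesgue R (f :: real^'n::finite \<Rightarrow> real)"
  shows "(\<integral>\<^sup>+x. ennreal \<bar>f x\<bar> * indicator R x \<partial>lebesgue) = ennreal (LINT x:R|lebesgue. \<bar>f x\<bar>)"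
proof -
  have i: "integrable lebesgue (\<lambda>x. indicator R x *\<^sub>R \<bar>f x\<bar>)"
    using set_integrable_abs[OF assms] unfolding set_integrable_def .
  have "(\<integral>\<^sup>+x. ennreal (indicator R x *\<^sub>R \<bar>f x\<bar>) \<partial>lebesgue) = ennreal (integral\<^sup>L lebesgue (\<lambda>x. indicator R x *\<^sub>R \<bar>f x\<bar>))"
    by (rule nn_integral_eq_integral[OF i]) (auto simp: indicator_def)
  moreover have "\<And>x. ennreal (indicator R x *\<^sub>R \<bar>f x\<bar>) = ennreal \<bar>f x\<bar> * indicator R x"
    by (auto simp: indicator_def)
  ultimately show ?thesis by (simp add: set_lebesgue_integral_def)
qed


lemma anc_anc:
  "dyadic_cube (k - int j - int i) (\<lambda>x. m x div 2^j div 2^i) = dyadic_cube (k - int (j+i)) (\<lambda>x. m x div 2^(j+i))"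
proof -
  have "(\<lambda>x. m x div 2^j div 2^i) = (\<lambda>x. m x div 2^(j+i))"
    by (simp add: zdiv_zmult2_eq power_add)
  moreover have "k - int j - int i = k - int (j+i)" by simp
  ultimately show ?thesis by (simp only:)
qed

lemma meas_anc:
  "measure lebesgue (dyadic_cube (k - int j) (\<lambda>i. m i div 2^j) :: (real^'n::finite) set)
     = 2 powr (real j * real CARD('n)) * measure lebesgue (dyadic_cube k m :: (real^'n) set)"
  by (simp add: measure_dyadic_cube powr_add[symmetric] algebra_simps)

lemma two_powr_card: "2 \<le> 2 powr real CARD('n::finite)"
proof -
  have "(2::real) powr 1 \<le> 2 powr real CARD('n)"
    by (intro powr_mono) (auto simp: Suc_le_eq)
  then show ?thesis by simp
qed

lemma chain_sparse:
  "sparse UNIV (\<lambda>j. dyadic_cube (k - int j) (\<lambda>i. m i div 2^j) :: (real^'n::finite) set)"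
proof -
  define A :: "nat \<Rightarrow> (real^'n) set" where "A j = dyadic_cube (k - int j) (\<lambda>i. m i div 2^j)" for j
  define E where "E j = (if j = 0 then A 0 else A j - A (j - 1))" for j
  have mono: "i \<le> j \<Longrightarrow> A i \<subseteq> A j" for i j unfolding A_def by (rule anc_mono)
  have key: "E i \<inter> E j = {}" if "i < j" for i j
  proof -
    have "E i \<subseteq> A i" by (auto simp: E_def)
    also have "A i \<subseteq> A (j - 1)" using mono[of i "j - 1"] that by simp
    finally have "E i \<subseteq> A (j - 1)" .
    moreover have "E j \<inter> A (j - 1) = {}" using that by (auto simp: E_def)
    ultimately show ?thesis by blast
  qed
  have disj: "disjoint_family_on E UNIV"
    unfolding disjoint_family_on_def
  proof (intro ballI impI)
    fix i j :: nat assume "i \<noteq> j"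
    then show "E i \<inter> E j = {}" using key[of i j] key[of j i] by (cases "i < j") auto
  qed
  have meas: "measure lebesgue (E j) \<ge> measure lebesgue (A j) / 2" for j
  proof (cases j)
    case 0
    then show ?thesis by (simp add: E_def)
  next
    case (Suc j')
    have Ej: "E j = A j - A j'" using Suc by (simp add: E_def)
    have "measure lebesgue (A j - A j') = measure lebesgue (A j) - measure lebesgue (A j')"
      unfolding A_def using Suc mono[of j' j] unfolding A_def
      by (intro measure_Diff dyadic_cube_fin dyadic_cube_sets) auto
    then have "measure lebesgue (E j) = measure lebesgue (A j) - measure lebesgue (A j')"
      using Ej by simp
    moreover have "measure lebesgue (A j) = 2 powr real CARD('n) * measure lebesgue (A j')"
      unfolding A_def Suc meas_anc[of k j'] meas_anc[of k "Suc j'"]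
      by (simp add: powr_add[symmetric] algebra_simps)
    moreover have "0 \<le> measure lebesgue (A j')" by simp
    ultimately show ?thesis using two_powr_card[where 'n='n]
      mult_right_mono[of 2 "2 powr real CARD('n)" "measure lebesgue (A j')"] by (simp add: mult.commute)
  qed
  have AA: "(\<lambda>j. dyadic_cube (k - int j) (\<lambda>i. m i div 2^j)) = A" by (simp add: A_def fun_eq_iff)
  show ?thesis unfolding sparse_def AA
  proof (intro conjI exI[of _ E])
    show "\<forall>i\<in>UNIV. A i \<in> dyadic_cubes" unfolding A_def by auto
    show "disjoint_family_on E UNIV" by (rule disj)
    show "\<forall>i\<in>UNIV. E i \<in> sets lebesgue \<and> E i \<subseteq> A i \<and> measure lebesgue (A i) / 2 \<le> measure lebesgue (E i)"
      using meas by (auto simp: E_def A_def)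
  qed
qed

context
  fixes p q \<alpha> :: real and f :: "real^'n::finite \<Rightarrow> real"
  assumes p1: "1 \<le> p" and pq: "p \<le> q" and pq\<alpha>: "p = q \<longrightarrow> \<alpha> \<le> 0" and li: "loc_integrable f"
begin

definition "aa = 1/p - 1/q"

definition "V Q = measure lebesgue Q powr (aa - 1) * logw \<alpha> Q * (LINT y:Q|lebesgue. \<bar>f y\<bar>)"

lemma q_pos: "0 < q" using p1 pq by simp

lemma aa_ge0: "0 \<le> aa"
  using p1 pq by (simp add: aa_def frac_le)

lemma aa0: "aa = 0 \<longrightarrow> \<alpha> \<le> 0"
  using p1 pq pq\<alpha> by (auto simp: aa_def)

lemma meas_pos: "Q \<in> dyadic_cubes \<Longrightarrow> 0 < measure lebesgue Q"
  by (auto elim!: dyadic_cubesE simp: measure_dyadic_cube)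

lemma dyadic_sets: "Q \<in> dyadic_cubes \<Longrightarrow> Q \<in> sets lebesgue"
  by (auto elim!: dyadic_cubesE)

lemma dyadic_fmeas: "Q \<in> (dyadic_cubes :: (real^'n) set set) \<Longrightarrow> Q \<in> fmeasurable lebesgue"
  by (auto elim!: dyadic_cubesE simp: dyadic_cube_fmeasurable)

lemma cube_int: "Q \<in> dyadic_cubes \<Longrightarrow> set_integrable lebesgue Q f"
proof (elim dyadic_cubesE)
  fix k m assume Q: "Q = dyadic_cube k m"
  have "set_integrable lebesgue (cbox (\<chi> i. 2 powr (- real_of_int k) * real_of_int (m i)) (\<chi> i. 2 powr (- real_of_int k) * (real_of_int (m i) + 1))) f"
    using li unfolding loc_integrable_def by auto
  then show "set_integrable lebesgue Q f"
    unfolding Q by (rule set_integrable_subset) (auto simp: dyadic_cube_box(2))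
qed

lemma int_nonneg: "0 \<le> (LINT y:Q|lebesgue. \<bar>f y\<bar>)"
  unfolding set_lebesgue_integral_def by (rule integral_nonneg_AE) (auto simp: indicator_def)

lemma int_mono:
  assumes "Q \<in> dyadic_cubes" "P \<in> dyadic_cubes" "Q \<subseteq> P"
  shows "(LINT y:Q|lebesgue. \<bar>f y\<bar>) \<le> (LINT y:P|lebesgue. \<bar>f y\<bar>)"
proof -
  have "ennreal (LINT y:Q|lebesgue. \<bar>f y\<bar>) = (\<integral>\<^sup>+x. ennreal \<bar>f x\<bar> * indicator Q x \<partial>lebesgue)"
    using set_nn_abs[OF cube_int[OF assms(1)]] by simp
  also have "\<dots> \<le> (\<integral>\<^sup>+x. ennreal \<bar>f x\<bar> * indicator P x \<partial>lebesgue)"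
    using assms(3) by (intro nn_integral_mono) (auto simp: indicator_def)
  also have "\<dots> = ennreal (LINT y:P|lebesgue. \<bar>f y\<bar>)"
    using set_nn_abs[OF cube_int[OF assms(2)]] by simp
  finally show ?thesis using int_nonneg by (simp add: ennreal_le_iff)
qed

lemma logw_pos: "0 < logw \<alpha> Q"
  unfolding logw_def by simp

lemma V_nonneg: "0 \<le> V Q"
  unfolding V_def by (intro mult_nonneg_nonneg int_nonneg) (auto simp: logw_pos less_imp_le)

lemma T_eq:
  assumes "Q \<in> dyadic_cubes"
  shows "SR_term p q \<alpha> f Q = measure lebesgue Q * V Q powr q"
proof -
  let ?m = "measure lebesgue Q"
  have m: "0 < ?m" using meas_pos[OF assms] .
  have "?m powr (1/p - 1) = ?m powr (1/q) * ?m powr (aa - 1)"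
    by (simp add: powr_add[symmetric] aa_def)
  then have "logw \<alpha> Q * ?m powr (1/p - 1) * (LINT x:Q|lebesgue. \<bar>f x\<bar>) = ?m powr (1/q) * V Q"
    by (simp add: V_def algebra_simps)
  then have "SR_term p q \<alpha> f Q = (?m powr (1/q) * V Q) powr q"
    by (simp add: SR_term_def)
  also have "\<dots> = ?m * V Q powr q"
    using m V_nonneg q_pos by (simp add: powr_mult powr_powr)
  finally show ?thesis .
qed

lemma max_op_eq:
  "max_op (real CARD('n) * (1/p - 1/q)) \<alpha> f x = (SUP Q\<in>{Q\<in>dyadic_cubes. x \<in> Q}. ennreal (V Q))"
proof -
  have "real CARD('n) * (1/p - 1/q) / real CARD('n) = aa" by (simp add: aa_def)
  then show ?thesis unfolding max_op_def V_def by simp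
qed


lemma V_le_max:
  assumes "Q \<in> dyadic_cubes" "x \<in> Q"
  shows "ennreal (V Q) \<le> max_op (real CARD('n) * (1/p - 1/q)) \<alpha> f x"
  unfolding max_op_eq using assms by (intro SUP_upper) auto

lemma powr_le_enn_powr:
  assumes "ennreal v \<le> M" "0 \<le> v"
  shows "ennreal (v powr q) \<le> enn_powr M q"
proof (cases "M = \<infinity>")
  case True then show ?thesis by (simp add: enn_powr_def)
next
  case False
  then obtain m where m: "M = ennreal m" "0 \<le> m" by (cases M rule: ennreal_cases) auto
  then have "v \<le> enn2real M" using assms by simp
  then have "v powr q \<le> enn2real M powr q" using assms q_pos by (intro powr_mono2) auto
  then show ?thesis using False by (simp add: enn_powr_def)
qed

lemma easy_dir:
  assumes "f \<in> max_Lq (real CARD('n) * (1/p - 1/q)) \<alpha> q"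
  shows "f \<in> SR_log p q \<alpha>"
proof -
  let ?M = "max_op (real CARD('n) * (1/p - 1/q)) \<alpha> f"
  define G where "G x = enn_powr (?M x) q" for x
  have Gfin: "(\<integral>\<^sup>+x. G x \<partial>lebesgue) < \<infinity>" using assms by (simp add: max_Lq_def G_def)
  have bound: "(\<Sum>i. if i \<in> I then ennreal (SR_term p q \<alpha> f (Q i)) else 0) \<le> 2 * (\<integral>\<^sup>+x. G x \<partial>lebesgue)"
    if sp: "sparse I Q" for I Q
  proof -
    from sp obtain E where Qd: "\<forall>i\<in>I. Q i \<in> dyadic_cubes" and dj: "disjoint_family_on E I"
      and E: "\<forall>i\<in>I. E i \<in> sets lebesgue \<and> E i \<subseteq> Q i \<and> measure lebesgue (E i) \<ge> measure lebesgue (Q i) / 2"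
      unfolding sparse_def by blast
    define c where "c i = V (Q i) powr q" for i
    define h where "h i x = (if i \<in> I then ennreal (c i) * indicator (E i) x else 0)" for i x
    have hm: "h i \<in> borel_measurable lebesgue" for i
    proof (cases "i \<in> I")
      case True
      then have "E i \<in> sets lebesgue" using E by auto
      then show ?thesis unfolding h_def[abs_def] using True by simp
    next
      case False
      then show ?thesis unfolding h_def[abs_def] by simp
    qed
    have t1: "(if i \<in> I then ennreal (SR_term p q \<alpha> f (Q i)) else 0) \<le> 2 * (\<integral>\<^sup>+x. h i x \<partial>lebesgue)" for i
    proof (cases "i \<in> I")
      case True
      have Ei: "E i \<in> sets lebesgue" "E i \<subseteq> Q i" "measure lebesgue (E i) \<ge> measure lebesgue (Q i) / 2"
        using E True by auto
      have Qi: "Q i \<in> dyadic_cubes" using Qd True by auto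
      have fin: "emeasure lebesgue (E i) \<noteq> \<infinity>"
      proof -
        have "emeasure lebesgue (E i) \<le> emeasure lebesgue (Q i)"
          using Ei dyadic_sets[OF Qi] by (intro emeasure_mono) auto
        moreover have "emeasure lebesgue (Q i) < \<infinity>" using dyadic_fmeas[OF Qi] unfolding fmeasurable_def by blast
        ultimately show ?thesis by auto
      qed
      have "(\<integral>\<^sup>+x. h i x \<partial>lebesgue) = ennreal (c i) * emeasure lebesgue (E i)"
        using True Ei by (simp add: h_def nn_integral_cmult_indicator)
      also have "\<dots> = ennreal (c i * measure lebesgue (E i))"
        using fin by (simp add: emeasure_eq_ennreal_measure ennreal_mult c_def)
      finally have hi: "(\<integral>\<^sup>+x. h i x \<partial>lebesgue) = ennreal (c i * measure lebesgue (E i))" .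
      have "SR_term p q \<alpha> f (Q i) = measure lebesgue (Q i) * c i" using T_eq[OF Qi] by (simp add: c_def)
      also have "\<dots> \<le> 2 * (c i * measure lebesgue (E i))"
        using Ei(3) mult_right_mono[of "measure lebesgue (Q i)" "2 * measure lebesgue (E i)" "V (Q i) powr q"]
        by (simp add: c_def algebra_simps)
      finally have "ennreal (SR_term p q \<alpha> f (Q i)) \<le> ennreal (2 * (c i * measure lebesgue (E i)))"
        by (rule ennreal_leI)
      then show ?thesis using True hi by (simp add: ennreal_mult c_def)
    qed simp
    have t2: "(\<Sum>i. h i x) \<le> G x" for x
    proof (cases "\<exists>i\<in>I. x \<in> E i")
      case True
      then obtain i0 where i0: "i0 \<in> I" "x \<in> E i0" by blast
      have z: "h i x = 0" if "i \<noteq> i0" for i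
      proof (cases "i \<in> I")
        case True
        then have "x \<notin> E i" using dj i0 that unfolding disjoint_family_on_def by blast
        then show ?thesis by (simp add: h_def)
      qed (simp add: h_def)
      have "(\<Sum>i. h i x) = (\<Sum>i\<in>{i0}. h i x)" by (rule suminf_finite) (use z in auto)
      also have "\<dots> = ennreal (c i0)" using i0 by (simp add: h_def)
      also have "\<dots> \<le> G x"
        unfolding G_def c_def
        using i0 E Qd by (intro powr_le_enn_powr V_le_max V_nonneg) auto
      finally show ?thesis .
    next
      case False
      then have "h i x = 0" for i by (auto simp: h_def)
      then show ?thesis by simp
    qed
    have "(\<Sum>i. if i \<in> I then ennreal (SR_term p q \<alpha> f (Q i)) else 0) \<le> (\<Sum>i. 2 * (\<integral>\<^sup>+x. h i x \<partial>lebesgue))"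
      by (intro suminf_le t1) auto
    also have "\<dots> = 2 * (\<integral>\<^sup>+x. (\<Sum>i. h i x) \<partial>lebesgue)"
      by (simp add: nn_integral_suminf[OF hm])
    also have "\<dots> \<le> 2 * (\<integral>\<^sup>+x. G x \<partial>lebesgue)"
      by (intro mult_left_mono nn_integral_mono t2) auto
    finally show ?thesis .
  qed
  have "(SUP (I, Q) \<in> {(I, Q). sparse I Q}. (\<Sum>i. if i \<in> I then ennreal (SR_term p q \<alpha> f (Q i)) else 0))
        \<le> 2 * (\<integral>\<^sup>+x. G x \<partial>lebesgue)"
  proof (rule SUP_least)
    fix z :: "nat set \<times> (nat \<Rightarrow> (real^'n) set)" assume "z \<in> {(I, Q). sparse I Q}"
    then obtain I Q where z: "z = (I, Q)" "sparse I Q" by blast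
    show "(case z of (I, Q) \<Rightarrow> (\<Sum>i. if i \<in> I then ennreal (SR_term p q \<alpha> f (Q i)) else 0)) \<le> 2 * (\<integral>\<^sup>+x. G x \<partial>lebesgue)"
      unfolding z(1) using bound[OF z(2)] by simp
  qed
  also have "\<dots> < \<infinity>" using Gfin by (simp add: ennreal_mult_less_top)
  finally have "(SUP (I, Q) \<in> {(I, Q). sparse I Q}. (\<Sum>i. if i \<in> I then ennreal (SR_term p q \<alpha> f (Q i)) else 0)) < \<infinity>" .
  moreover have "loc_integrable f" using assms unfolding max_Lq_def by blast
  ultimately show ?thesis unfolding SR_log_def by blast
qed


definition "D t = {Q\<in>dyadic_cubes. t < V Q \<and> (\<forall>P\<in>dyadic_cubes. Q \<subset> P \<longrightarrow> V P \<le> t)}"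

definition "Om t = \<Union> (D t)"

lemma SR_nonneg: "Q \<in> dyadic_cubes \<Longrightarrow> 0 \<le> SR_term p q \<alpha> f Q"
  by (simp add: T_eq less_imp_le meas_pos)


lemma D_dyadic: "Q \<in> D t \<Longrightarrow> Q \<in> dyadic_cubes" by (simp add: D_def)
lemma D_V: "Q \<in> D t \<Longrightarrow> t < V Q" by (simp add: D_def)

lemma D_sub:
  assumes "Q \<in> D t" "R \<in> D t'" "t \<le> t'" "R \<inter> Q \<noteq> {}"
  shows "R \<subseteq> Q"
proof (rule ccontr)
  assume "\<not> R \<subseteq> Q"
  then have "Q \<subset> R" using dyadic_nested_or_disjoint[OF D_dyadic[OF assms(2)] D_dyadic[OF assms(1)] assms(4)] by auto
  then have "V R \<le> t" using assms(1,2) by (auto simp: D_def)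
  then show False using assms(2,3) by (auto simp: D_def)
qed

lemma D_disj:
  assumes "Q \<in> D t" "Q' \<in> D t" "Q \<noteq> Q'"
  shows "Q \<inter> Q' = {}"
proof (rule ccontr)
  assume ne: "Q \<inter> Q' \<noteq> {}"
  have "Q' \<subseteq> Q" using D_sub[OF assms(1,2)] ne by auto
  moreover have "Q \<subseteq> Q'" using D_sub[OF assms(2,1)] ne by auto
  ultimately show False using assms(3) by auto
qed

lemma countable_D: "countable (D t)"
  by (rule countable_subset[OF _ countable_dyadic_cubes]) (auto simp: D_def)

lemma Om_sets: "Om t \<in> sets lebesgue"
  unfolding Om_def by (intro sets.countable_Union countable_D) (auto dest: D_dyadic dyadic_sets)

definition "Cq = (SOME C. C > 0 \<and> (\<forall>s t. 0 < s \<longrightarrow> s \<le> t \<longrightarrow>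
     s powr aa * (1 - min (ln s) 0) powr \<alpha> \<le> C * (t powr aa * (1 - min (ln t) 0) powr \<alpha>)))"

lemma Cq: "Cq > 0 \<and> (\<forall>s t. 0 < s \<longrightarrow> s \<le> t \<longrightarrow>
     s powr aa * (1 - min (ln s) 0) powr \<alpha> \<le> Cq * (t powr aa * (1 - min (ln t) 0) powr \<alpha>))"
  unfolding Cq_def by (rule someI_ex) (use qm_real[OF aa_ge0 aa0] in auto)

lemma qm:
  fixes R Q :: "(real^'n) set"
  assumes "R \<in> dyadic_cubes" "Q \<in> dyadic_cubes" "R \<subseteq> Q"
  shows "measure lebesgue R powr aa * logw \<alpha> R \<le> Cq * (measure lebesgue Q powr aa * logw \<alpha> Q)"
proof -
  have "measure lebesgue R \<le> measure lebesgue Q"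
    by (rule measure_mono_fmeasurable[OF assms(3) dyadic_sets[OF assms(1)] dyadic_fmeas[OF assms(2)]])
  then show ?thesis using Cq meas_pos[OF assms(1)] unfolding logw_def by blast
qed

definition "Cp = 2 powr real CARD('n) * (1 + ln (2 powr real CARD('n))) powr (max \<alpha> 0)"

lemma Cp_pos: "0 < Cp"
proof -
  have "0 < 1 + real CARD('n) * ln 2" by (simp add: add_pos_nonneg)
  then show ?thesis unfolding Cp_def by simp
qed

lemma V_parent_gen:
  assumes Q: "Q = dyadic_cube k m"
  shows "V Q \<le> Cp * V (dyadic_cube (k - int 1) (\<lambda>i. m i div 2^1))"
proof -
  define P where "P = dyadic_cube (k - int 1) (\<lambda>i. m i div 2^1)"
  define c :: real where "c = 2 powr real CARD('n)"
  have c2: "2 \<le> c" unfolding c_def by (rule two_powr_card)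
  have Qd: "Q \<in> dyadic_cubes" and Pd: "P \<in> dyadic_cubes" using Q by (auto simp: P_def)
  have QP: "Q \<subseteq> P" unfolding Q P_def by (rule cube_anc_sub)
  have mQ: "0 < measure lebesgue Q" by (rule meas_pos[OF Qd])
  have mP: "measure lebesgue P = c * measure lebesgue Q"
    unfolding P_def Q c_def using meas_anc[of k 1 m] by simp
  have e1: "measure lebesgue Q powr (aa - 1) \<le> c * measure lebesgue P powr (aa - 1)"
  proof -
    have "measure lebesgue P powr (aa - 1) = c powr (aa - 1) * measure lebesgue Q powr (aa - 1)"
      unfolding mP using c2 mQ by (simp add: powr_mult)
    moreover have "c powr (aa - 1) * c = c powr aa" using c2 powr_add[of c "aa - 1" 1] by simp
    moreover have "1 \<le> c powr aa" using c2 aa_ge0 by (simp add: ge_one_powr_ge_zero)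
    ultimately have "c * measure lebesgue P powr (aa - 1) = c powr aa * measure lebesgue Q powr (aa - 1)"
      by (simp add: algebra_simps)
    moreover have "1 * measure lebesgue Q powr (aa - 1) \<le> c powr aa * measure lebesgue Q powr (aa - 1)"
      using \<open>1 \<le> c powr aa\<close> by (intro mult_right_mono) auto
    ultimately show ?thesis by simp
  qed
  have e2: "logw \<alpha> Q \<le> (1 + ln c) powr (max \<alpha> 0) * logw \<alpha> P"
    unfolding logw_def mP using parent_real[OF mQ, of c \<alpha>] c2 by simp
  have e3: "(LINT y:Q|lebesgue. \<bar>f y\<bar>) \<le> (LINT y:P|lebesgue. \<bar>f y\<bar>)"
    by (rule int_mono[OF Qd Pd QP])
  have "V Q \<le> (c * measure lebesgue P powr (aa - 1)) * ((1 + ln c) powr (max \<alpha> 0) * logw \<alpha> P) * (LINT y:P|lebesgue. \<bar>f y\<bar>)"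
    unfolding V_def
    by (intro mult_mono e1 e2 e3 mult_nonneg_nonneg int_nonneg) (use c2 in \<open>auto simp: logw_pos less_imp_le\<close>)
  also have "\<dots> = Cp * V P" by (simp add: V_def Cp_def c_def)
  finally show ?thesis unfolding P_def .
qed

lemma D_parent:
  assumes "Q \<in> D t"
  shows "V Q \<le> Cp * t"
proof -
  obtain k m where Q: "Q = dyadic_cube k m" using D_dyadic[OF assms] by (rule dyadic_cubesE)
  define P where "P = dyadic_cube (k - int 1) (\<lambda>i. m i div 2^1)"
  have QP: "Q \<subseteq> P" unfolding Q P_def by (rule cube_anc_sub)
  have "measure lebesgue P = 2 powr real CARD('n) * measure lebesgue Q"
    unfolding P_def Q using meas_anc[of k 1 m] by simp
  moreover have "0 < measure lebesgue Q" using meas_pos D_dyadic[OF assms] by blast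
  moreover have "2 \<le> 2 powr real CARD('n)" by (rule two_powr_card)
  ultimately have "measure lebesgue P \<noteq> measure lebesgue Q" by auto
  then have "Q \<subset> P" using QP by auto
  then have "V P \<le> t" using assms by (auto simp: D_def P_def)
  then have "Cp * V P \<le> Cp * t" using Cp_pos by simp
  moreover have "V Q \<le> Cp * V P" unfolding P_def by (rule V_parent_gen[OF Q])
  ultimately show ?thesis by simp
qed


lemma mV:
  fixes Q :: "(real^'n) set"
  assumes "Q \<in> dyadic_cubes"
  shows "measure lebesgue Q * V Q = measure lebesgue Q powr aa * logw \<alpha> Q * (LINT y:Q|lebesgue. \<bar>f y\<bar>)"
proof -
  have m: "0 < measure lebesgue Q" using meas_pos[OF assms] .
  have "measure lebesgue Q * measure lebesgue Q powr (aa - 1) = measure lebesgue Q powr aa"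
    using m powr_add[of "measure lebesgue Q" 1 "aa - 1"] by simp
  then show ?thesis unfolding V_def by (simp add: algebra_simps)
qed

lemma dens_meas:
  fixes Q :: "(real^'n) set"
  assumes Qd: "Q \<in> dyadic_cubes"
  defines "g \<equiv> \<lambda>x. ennreal \<bar>f x\<bar> * indicator Q x"
  shows "g \<in> borel_measurable lebesgue"
    and "\<And>R. R \<in> dyadic_cubes \<Longrightarrow> R \<subseteq> Q \<Longrightarrow> emeasure (density lebesgue g) R = ennreal (LINT y:R|lebesgue. \<bar>f y\<bar>)"
proof -
  have "integrable lebesgue (\<lambda>x. indicator Q x *\<^sub>R f x)"
    using cube_int[OF Qd] unfolding set_integrable_def .
  then have "(\<lambda>x. indicator Q x *\<^sub>R f x) \<in> borel_measurable lebesgue" by (rule borel_measurable_integrable)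
  then have "(\<lambda>x. ennreal \<bar>indicator Q x *\<^sub>R f x\<bar>) \<in> borel_measurable lebesgue" by measurable
  moreover have "(\<lambda>x. ennreal \<bar>indicator Q x *\<^sub>R f x\<bar>) = g"
    by (auto simp: g_def indicator_def fun_eq_iff)
  ultimately show gm: "g \<in> borel_measurable lebesgue" by (simp only:)
  fix R assume R: "R \<in> dyadic_cubes" "R \<subseteq> Q"
  have "emeasure (density lebesgue g) R = (\<integral>\<^sup>+x. g x * indicator R x \<partial>lebesgue)"
    by (rule emeasure_density[OF gm dyadic_sets[OF R(1)]])
  also have "\<dots> = (\<integral>\<^sup>+x. ennreal \<bar>f x\<bar> * indicator R x \<partial>lebesgue)"
    using R(2) by (intro nn_integral_cong) (auto simp: g_def indicator_def)
  also have "\<dots> = ennreal (LINT y:R|lebesgue. \<bar>f y\<bar>)"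
    by (rule set_nn_abs[OF cube_int[OF R(1)]])
  finally show "emeasure (density lebesgue g) R = ennreal (LINT y:R|lebesgue. \<bar>f y\<bar>)" .
qed

lemma meas_bound:
  assumes Q: "Q \<in> D t" and t: "0 < t" "t < t'"
  shows "measure lebesgue (Q \<inter> Om t') \<le> Cq * Cp * (t / t') * measure lebesgue Q"
proof -
  have Qd: "Q \<in> dyadic_cubes" by (rule D_dyadic[OF Q])
  have mQ: "0 < measure lebesgue Q" by (rule meas_pos[OF Qd])
  define RR where "RR = {R \<in> D t'. R \<subseteq> Q}"
  have sub: "Q \<inter> Om t' \<subseteq> \<Union>RR"
  proof
    fix x assume "x \<in> Q \<inter> Om t'"
    then obtain R where R: "R \<in> D t'" "x \<in> R" "x \<in> Q" by (auto simp: Om_def)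
    then have "R \<subseteq> Q" using D_sub[OF Q R(1)] t by auto
    then show "x \<in> \<Union>RR" using R by (auto simp: RR_def)
  qed
  have cR: "countable RR" unfolding RR_def by (rule countable_subset[OF _ countable_D[of t']]) auto
  have RRd: "R \<in> RR \<Longrightarrow> R \<in> dyadic_cubes" for R by (auto simp: RR_def D_def)
  have RRs: "R \<in> RR \<Longrightarrow> R \<in> sets lebesgue" for R by (auto dest: RRd dyadic_sets)
  have RRdisj: "disjoint_family_on (\<lambda>R. R) RR"
    unfolding disjoint_family_on_def RR_def using D_disj by auto
  have URs: "\<Union>RR \<in> sets lebesgue" using cR RRs by (intro sets.countable_Union) auto
  have URQ: "\<Union>RR \<subseteq> Q" by (auto simp: RR_def)
  define K where "K = Cq * (measure lebesgue Q powr aa * logw \<alpha> Q) / t'"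
  have K0: "0 \<le> K" using Cq t by (simp add: K_def logw_pos less_imp_le)
  define g where "g = (\<lambda>x. ennreal \<bar>f x\<bar> * indicator Q x)"
  have gm: "g \<in> borel_measurable lebesgue" unfolding g_def by (rule dens_meas(1)[OF Qd])
  have nuR: "emeasure (density lebesgue g) R = ennreal (LINT y:R|lebesgue. \<bar>f y\<bar>)"
    if "R \<in> dyadic_cubes" "R \<subseteq> Q" for R
    unfolding g_def by (rule dens_meas(2)[OF Qd that])
  have Rle: "emeasure lebesgue R \<le> ennreal K * emeasure (density lebesgue g) R" if R: "R \<in> RR" for R
  proof -
    have Rd: "R \<in> dyadic_cubes" and RQ: "R \<subseteq> Q" and RD: "R \<in> D t'" using R by (auto simp: RR_def D_def)
    have mR: "0 < measure lebesgue R" by (rule meas_pos[OF Rd])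
    have "measure lebesgue R * t' < measure lebesgue R * V R" using D_V[OF RD] mR by simp
    also have "\<dots> = measure lebesgue R powr aa * logw \<alpha> R * (LINT y:R|lebesgue. \<bar>f y\<bar>)" by (rule mV[OF Rd])
    also have "\<dots> \<le> Cq * (measure lebesgue Q powr aa * logw \<alpha> Q) * (LINT y:R|lebesgue. \<bar>f y\<bar>)"
      by (intro mult_right_mono qm[OF Rd Qd RQ] int_nonneg)
    finally have "measure lebesgue R \<le> K * (LINT y:R|lebesgue. \<bar>f y\<bar>)"
      using t by (simp add: K_def field_simps)
    then have "ennreal (measure lebesgue R) \<le> ennreal (K * (LINT y:R|lebesgue. \<bar>f y\<bar>))"
      by (rule ennreal_leI)
    also have "\<dots> = ennreal K * emeasure (density lebesgue g) R"
      using K0 int_nonneg by (simp add: nuR[OF Rd RQ] ennreal_mult)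
    finally show ?thesis unfolding dyadic_emeasure[OF Rd] .
  qed
  have c1: "emeasure lebesgue (Q \<inter> Om t') \<le> emeasure lebesgue (\<Union>RR)"
    using sub URs by (intro emeasure_mono) auto
  have c2: "emeasure lebesgue (\<Union>RR) = (\<integral>\<^sup>+R. emeasure lebesgue R \<partial>count_space RR)"
    using emeasure_UN_countable[of RR "\<lambda>R. R" lebesgue] RRs cR RRdisj by simp
  have c3: "(\<integral>\<^sup>+R. emeasure lebesgue R \<partial>count_space RR) \<le> (\<integral>\<^sup>+R. ennreal K * emeasure (density lebesgue g) R \<partial>count_space RR)"
    using Rle by (intro nn_integral_mono) auto
  have c4: "(\<integral>\<^sup>+R. ennreal K * emeasure (density lebesgue g) R \<partial>count_space RR) = ennreal K * (\<integral>\<^sup>+R. emeasure (density lebesgue g) R \<partial>count_space RR)"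
    by (rule nn_integral_cmult) simp
  have c5: "(\<integral>\<^sup>+R. emeasure (density lebesgue g) R \<partial>count_space RR) = emeasure (density lebesgue g) (\<Union>RR)"
    using emeasure_UN_countable[of RR "\<lambda>R. R" "density lebesgue g"] RRs cR RRdisj by simp
  have c6: "emeasure (density lebesgue g) (\<Union>RR) \<le> emeasure (density lebesgue g) Q"
    using URs URQ Qd by (intro emeasure_mono) (auto simp: dyadic_sets)
  have c7: "emeasure (density lebesgue g) Q = ennreal (LINT y:Q|lebesgue. \<bar>f y\<bar>)"
    by (rule nuR[OF Qd]) simp
  have c8: "ennreal K * emeasure (density lebesgue g) (\<Union>RR) \<le> ennreal K * ennreal (LINT y:Q|lebesgue. \<bar>f y\<bar>)"
    using c6 c7 by (simp add: mult_left_mono)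
  have c45: "(\<integral>\<^sup>+R. ennreal K * emeasure (density lebesgue g) R \<partial>count_space RR) = ennreal K * emeasure (density lebesgue g) (\<Union>RR)"
    using c4 c5 by simp
  note c1
  also note c2
  also note c3
  also note c45
  also note c8
  also have "ennreal K * ennreal (LINT y:Q|lebesgue. \<bar>f y\<bar>) = ennreal (K * (LINT y:Q|lebesgue. \<bar>f y\<bar>))"
    using K0 int_nonneg by (simp add: ennreal_mult)
  finally have le0: "emeasure lebesgue (Q \<inter> Om t') \<le> ennreal (K * (LINT y:Q|lebesgue. \<bar>f y\<bar>))" .
  have "K * (LINT y:Q|lebesgue. \<bar>f y\<bar>) = Cq * (measure lebesgue Q * V Q) / t'"
    unfolding K_def mV[OF Qd] by (simp add: algebra_simps)
  also have "\<dots> \<le> Cq * (measure lebesgue Q * (Cp * t)) / t'"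
    using D_parent[OF Q] mQ Cq t by (intro divide_right_mono mult_left_mono) auto
  also have "\<dots> = Cq * Cp * (t / t') * measure lebesgue Q" by (simp add: algebra_simps)
  finally have "ennreal (K * (LINT y:Q|lebesgue. \<bar>f y\<bar>)) \<le> ennreal (Cq * Cp * (t / t') * measure lebesgue Q)"
    by (rule ennreal_leI)
  with le0 have le: "emeasure lebesgue (Q \<inter> Om t') \<le> ennreal (Cq * Cp * (t / t') * measure lebesgue Q)"
    by (rule order_trans)
  have "emeasure lebesgue (Q \<inter> Om t') \<noteq> \<infinity>"
  proof -
    have "emeasure lebesgue (Q \<inter> Om t') \<le> emeasure lebesgue Q"
      using Qd Om_sets by (intro emeasure_mono) (auto simp: dyadic_sets)
    moreover have "emeasure lebesgue Q \<noteq> \<infinity>" unfolding dyadic_emeasure[OF Qd] by simp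
    ultimately show ?thesis by (auto simp: top_unique)
  qed
  then show ?thesis using le Cq Cp_pos t mQ
    by (simp add: emeasure_eq_ennreal_measure)
qed

context
  fixes B :: ennreal
  assumes Bfin: "B < \<infinity>"
  and Bsp: "\<And>I Q. sparse I Q \<Longrightarrow> (\<Sum>i. if i \<in> I then ennreal (SR_term p q \<alpha> f (Q i)) else 0) \<le> B"
begin

lemma ex_max:
  assumes "P \<in> dyadic_cubes" "0 < t" "t < V P"
  shows "\<exists>Q\<in>D t. P \<subseteq> Q"
proof -
  obtain k m where P: "P = dyadic_cube k m" using assms(1) by (rule dyadic_cubesE)
  define A where "A j = dyadic_cube (k - int j) (\<lambda>i. m i div 2^j)" for j
  define J where "J = {j. t < V (A j)}"
  have A0: "A 0 = P" by (simp add: A_def P)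
  have AA: "(\<lambda>j. dyadic_cube (k - int j) (\<lambda>i. m i div 2^j)) = A" by (simp add: A_def fun_eq_iff)
  have sp: "sparse UNIV A" using chain_sparse[of k m] unfolding AA .
  have sumB: "(\<Sum>j. ennreal (SR_term p q \<alpha> f (A j))) \<le> B" using Bsp[OF sp] by simp
  have Ad: "A j \<in> dyadic_cubes" for j by (simp add: A_def)
  have mP: "0 < measure lebesgue P" using assms(1) by (rule meas_pos)
  have TA: "measure lebesgue P * t powr q \<le> SR_term p q \<alpha> f (A j)" if "j \<in> J" for j
  proof -
    have "measure lebesgue P \<le> measure lebesgue (A j)"
    proof -
      have "(2::real) powr 0 \<le> 2 powr (real j * real CARD('n))" by (intro powr_mono) auto
      then have "1 \<le> 2 powr (real j * real CARD('n))" by simp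
      then have "1 * measure lebesgue P \<le> 2 powr (real j * real CARD('n)) * measure lebesgue P"
        using mP by (intro mult_right_mono) auto
      then show ?thesis unfolding A_def P meas_anc by simp
    qed
    moreover have "t powr q \<le> V (A j) powr q"
      using that assms(2) q_pos by (intro powr_mono2) (auto simp: J_def)
    ultimately show ?thesis unfolding T_eq[OF Ad]
      using mP assms(2) by (intro mult_mono) auto
  qed
  have finJ: "finite J"
  proof (rule ccontr)
    assume inf: "infinite J"
    define c where "c = measure lebesgue P * t powr q"
    have c0: "0 < c" using mP assms(2) by (simp add: c_def)
    obtain b where b: "B = ennreal b" "0 \<le> b" using Bfin by (cases B rule: ennreal_cases) auto
    define N where "N = nat \<lceil>b / c\<rceil> + 1"
    obtain J' where J': "finite J'" "card J' = N" "J' \<subseteq> J"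
      using infinite_arbitrarily_large[OF inf] by blast
    have "real N * c \<le> (\<Sum>j\<in>J'. SR_term p q \<alpha> f (A j))"
      using sum_bounded_below[of J' c "\<lambda>j. SR_term p q \<alpha> f (A j)"] TA J' by (auto simp: c_def)
    then have "ennreal (real N * c) \<le> (\<Sum>j\<in>J'. ennreal (SR_term p q \<alpha> f (A j)))"
      using SR_nonneg[OF Ad] by (simp add: sum_nonneg)
    also have "\<dots> \<le> (\<Sum>j. ennreal (SR_term p q \<alpha> f (A j)))"
      using J'(1) by (intro sum_le_suminf) auto
    also have "\<dots> \<le> ennreal b" using sumB b by simp
    finally have "real N * c \<le> b" using b(2) by simp
    moreover have "b < real N * c"
    proof -
      have "b / c < real N" unfolding N_def by linarith
      then show ?thesis using c0 by (simp add: divide_less_eq mult.commute)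
    qed
    ultimately show False by simp
  qed
  have "0 \<in> J" using A0 assms by (simp add: J_def)
  define j0 where "j0 = Max J"
  have j0J: "j0 \<in> J" unfolding j0_def using finJ \<open>0 \<in> J\<close> by (intro Max_in) auto
  have j0max: "j \<le> j0" if "j \<in> J" for j unfolding j0_def using finJ that by simp
  show ?thesis
  proof (intro bexI[of _ "A j0"])
    show "P \<subseteq> A j0" using anc_mono[of 0 j0 k m] A0 unfolding A_def by simp
    have "\<forall>Q'\<in>dyadic_cubes. A j0 \<subset> Q' \<longrightarrow> V Q' \<le> t"
    proof (intro ballI impI)
      fix Q' assume Q': "Q' \<in> dyadic_cubes" "A j0 \<subset> Q'"
      obtain i where "Q' = dyadic_cube (k - int j0 - int i) (\<lambda>x. m x div 2^j0 div 2^i)"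
        using dyadic_super[OF Q'(1), of "k - int j0" "\<lambda>x. m x div 2^j0"] Q'(2) unfolding A_def by auto
      then have Qi: "Q' = A (j0 + i)" unfolding anc_anc A_def by simp
      have "i \<noteq> 0" using Qi Q'(2) by auto
      then have "j0 + i \<notin> J" using j0max by fastforce
      then show "V Q' \<le> t" using Qi by (simp add: J_def)
    qed
    then show "A j0 \<in> D t" using j0J Ad unfolding D_def J_def by auto
  qed
qed


lemma in_Om:
  assumes "P \<in> dyadic_cubes" "x \<in> P" "0 < t" "t < V P"
  shows "x \<in> Om t"
  using ex_max[OF assms(1,3,4)] assms(2) by (auto simp: Om_def)

lemma Om_mono:
  assumes "0 < t" "t \<le> t'"
  shows "Om t' \<subseteq> Om t"
proof
  fix x assume "x \<in> Om t'"
  then obtain R where "R \<in> D t'" "x \<in> R" by (auto simp: Om_def)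
  then show "x \<in> Om t" using assms by (intro in_Om[of R]) (auto simp: D_def)
qed


lemma hard_main:
  "(\<integral>\<^sup>+x. enn_powr (max_op (real CARD('n) * (1/p - 1/q)) \<alpha> f x) q \<partial>lebesgue) < \<infinity>"
proof -
  let ?Mx = "max_op (real CARD('n) * (1/p - 1/q)) \<alpha> f"
  define tt where "tt k = 2 powr real_of_int k" for k :: int
  have tt_pos: "0 < tt k" for k by (simp add: tt_def)
  have tt_mono: "tt k \<le> tt k'" if "k \<le> k'" for k k' using that by (simp add: tt_def)
  obtain m0 :: nat where m0: "2 * (Cq * Cp) < 2 ^ m0" using real_arch_pow[of 2 "2 * (Cq * Cp)"] by auto
  define M :: nat where "M = Suc m0"
  have M0: "0 < M" by (simp add: M_def)
  have ttM: "tt k / tt (k + int M) = 1 / 2 ^ M" for k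
  proof -
    have "tt (k + int M) = tt k * 2 ^ M"
      by (simp add: tt_def powr_add powr_realpow)
    then show ?thesis using tt_pos[of k] by simp
  qed
  have CM: "Cq * Cp * (1 / 2 ^ M) \<le> 1 / 2"
  proof -
    have "0 \<le> Cq * Cp" using Cq Cp_pos by simp
    then have "Cq * Cp \<le> 2 ^ m0" using m0 by linarith
    then show ?thesis by (simp add: M_def field_simps)
  qed
  define F where "F = {(k, Q). Q \<in> D (tt k)}"
  have cF: "countable F"
  proof (rule countable_subset)
    show "F \<subseteq> UNIV \<times> dyadic_cubes" by (auto simp: F_def D_def)
    show "countable ((UNIV :: int set) \<times> (dyadic_cubes :: (real^'n) set set))"
      using countable_dyadic_cubes by (intro countable_SIGMA) auto
  qed
  define enc where "enc = to_nat_on F"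
  define dec where "dec = from_nat_into F"
  have dec_enc: "dec (enc z) = z" if "z \<in> F" for z unfolding dec_def enc_def using cF that by simp
  have enc_inj: "inj_on enc F" unfolding enc_def using cF by auto
  define lev where "lev i = fst (dec i)" for i
  define Qf where "Qf i = snd (dec i)" for i
  have FD: "snd z \<in> D (tt (fst z))" if "z \<in> F" for z using that by (auto simp: F_def)
  have encF: "Qf i \<in> D (tt (lev i))" if "i \<in> enc ` F" for i
    using that FD dec_enc by (auto simp: Qf_def lev_def)
  define Fr where "Fr r = {z \<in> F. fst z mod int M = r}" for r :: int
  define Ir where "Ir r = enc ` Fr r" for r
  define E where "E i = Qf i - Om (tt (lev i + int M))" for i
  have Ez: "E (enc z) = snd z - Om (tt (fst z + int M))" if "z \<in> F" for z
    using dec_enc[OF that] by (simp add: E_def Qf_def lev_def)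
  have Elt: "E (enc z) \<inter> E (enc z') = {}"
    if z: "z \<in> F" "z' \<in> F" "fst z < fst z'" "fst z mod int M = fst z' mod int M" for z z'
  proof -
    have "int M dvd fst z' - fst z" using z(4)[symmetric] by (simp add: mod_eq_dvd_iff)
    then have "int M \<le> fst z' - fst z" using z(3) by (intro zdvd_imp_le) auto
    then have le: "tt (fst z + int M) \<le> tt (fst z')" by (intro tt_mono) simp
    have "snd z' \<subseteq> Om (tt (fst z'))" using FD[OF z(2)] by (auto simp: Om_def)
    also have "\<dots> \<subseteq> Om (tt (fst z + int M))" by (rule Om_mono[OF tt_pos le])
    finally have "E (enc z') \<subseteq> Om (tt (fst z + int M))" using Ez[OF z(2)] by auto
    then show ?thesis using Ez[OF z(1)] by auto
  qed
  have Edisj: "E (enc z) \<inter> E (enc z') = {}"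
    if z: "z \<in> F" "z' \<in> F" "z \<noteq> z'" "fst z mod int M = fst z' mod int M" for z z'
  proof -
    consider "fst z = fst z'" | "fst z < fst z'" | "fst z' < fst z" by linarith
    then show ?thesis
    proof cases
      case 1
      then have "snd z \<noteq> snd z'" using z(3) by (auto simp: prod_eq_iff)
      moreover have "snd z \<in> D (tt (fst z))" using FD[OF z(1)] .
      moreover have "snd z' \<in> D (tt (fst z))" using FD[OF z(2)] 1 by simp
      ultimately have "snd z \<inter> snd z' = {}" by (rule D_disj[rotated 2])
      then show ?thesis using Ez z by auto
    next
      case 2 then show ?thesis using Elt z by blast
    next
      case 3 then show ?thesis using Elt[of z' z] z by auto
    qed
  qed
  have Emeas: "E i \<in> sets lebesgue \<and> E i \<subseteq> Qf i \<and> measure lebesgue (Qf i) / 2 \<le> measure lebesgue (E i)"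
    if i: "i \<in> enc ` F" for i
  proof -
    let ?Q = "Qf i" and ?O = "Om (tt (lev i + int M))"
    have QD: "?Q \<in> D (tt (lev i))" by (rule encF[OF i])
    have Qd: "?Q \<in> dyadic_cubes" by (rule D_dyadic[OF QD])
    have Qs: "?Q \<in> sets lebesgue" by (rule dyadic_sets[OF Qd])
    have Os: "?O \<in> sets lebesgue" by (rule Om_sets)
    have "measure lebesgue (?Q \<inter> ?O) \<le> Cq * Cp * (tt (lev i) / tt (lev i + int M)) * measure lebesgue ?Q"
      using tt_pos M0 by (intro meas_bound[OF QD]) (auto simp: tt_def)
    also have "\<dots> \<le> 1 / 2 * measure lebesgue ?Q"
      unfolding ttM using CM by (intro mult_right_mono) auto
    finally have b: "measure lebesgue (?Q \<inter> ?O) \<le> measure lebesgue ?Q / 2" by simp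
    have "E i = ?Q - (?Q \<inter> ?O)" by (auto simp: E_def)
    moreover have "measure lebesgue (?Q - (?Q \<inter> ?O)) = measure lebesgue ?Q - measure lebesgue (?Q \<inter> ?O)"
      using Qs Os by (intro measure_Diff) (auto simp: dyadic_emeasure[OF Qd])
    ultimately show ?thesis using b Qs Os by (auto simp: E_def)
  qed
  have sp: "sparse (Ir r) Qf" for r
    unfolding sparse_def
  proof (intro conjI exI[of _ E])
    show "\<forall>i\<in>Ir r. Qf i \<in> dyadic_cubes"
      using encF by (auto simp: Ir_def Fr_def intro: D_dyadic)
    show "disjoint_family_on E (Ir r)"
      unfolding disjoint_family_on_def
    proof (intro ballI impI)
      fix i j assume "i \<in> Ir r" "j \<in> Ir r" "i \<noteq> j"
      then obtain z z' where "z \<in> Fr r" "z' \<in> Fr r" "i = enc z" "j = enc z'" "z \<noteq> z'"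
        by (auto simp: Ir_def)
      then show "E i \<inter> E j = {}" using Edisj by (auto simp: Fr_def)
    qed
    show "\<forall>i\<in>Ir r. E i \<in> sets lebesgue \<and> E i \<subseteq> Qf i \<and> measure lebesgue (Qf i) / 2 \<le> measure lebesgue (E i)"
      using Emeas by (auto simp: Ir_def Fr_def)
  qed
  define X where "X i = ennreal (SR_term p q \<alpha> f (Qf i))" for i
  have decomp: "(if i \<in> enc ` F then X i else 0) = (\<Sum>r\<in>{0..<int M}. if i \<in> Ir r then X i else 0)" for i
  proof (cases "i \<in> enc ` F")
    case True
    then obtain z where z: "z \<in> F" "i = enc z" by auto
    have iff: "i \<in> Ir r \<longleftrightarrow> r = fst z mod int M" for r
    proof
      assume "i \<in> Ir r"
      then obtain z' where "z' \<in> Fr r" "i = enc z'" by (auto simp: Ir_def)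
      then have "z' = z" using z enc_inj by (auto simp: Fr_def inj_on_def)
      then show "r = fst z mod int M" using \<open>z' \<in> Fr r\<close> by (auto simp: Fr_def)
    qed (use z in \<open>auto simp: Ir_def Fr_def\<close>)
    have "fst z mod int M \<in> {0..<int M}" using M0 by auto
    then show ?thesis using True by (simp add: iff sum.delta)
  next
    case False
    then have "i \<notin> Ir r" for r by (auto simp: Ir_def Fr_def)
    then show ?thesis using False by simp
  qed
  have sumX: "(\<Sum>i. if i \<in> enc ` F then X i else 0) \<le> of_nat M * B"
  proof -
    have "(\<Sum>i. if i \<in> enc ` F then X i else 0) = (\<Sum>i. \<Sum>r\<in>{0..<int M}. if i \<in> Ir r then X i else 0)"
      by (simp only: decomp)
    also have "\<dots> = (\<Sum>r\<in>{0..<int M}. \<Sum>i. if i \<in> Ir r then X i else 0)"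
      by (rule suminf_sum) auto
    also have "\<dots> \<le> (\<Sum>r\<in>{0..<int M}. B)"
    proof (intro sum_mono)
      fix r
      have "(\<lambda>i. if i \<in> Ir r then X i else 0) = (\<lambda>i. if i \<in> Ir r then ennreal (SR_term p q \<alpha> f (Qf i)) else 0)"
        by (simp add: X_def fun_eq_iff)
      then show "(\<Sum>i. if i \<in> Ir r then X i else 0) \<le> B" using Bsp[OF sp[of r]] by simp
    qed
    also have "\<dots> = of_nat M * B" by simp
    finally show ?thesis .
  qed
  define c where "c = ennreal (2 powr q)"
  define h where "h i x = (if i \<in> enc ` F then c * ennreal (tt (lev i) powr q) * indicator (Qf i) x else 0)" for i x
  have hm: "h i \<in> borel_measurable lebesgue" for i
  proof (cases "i \<in> enc ` F")
    case True
    then have "Qf i \<in> sets lebesgue" using encF D_dyadic dyadic_sets by blast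
    then show ?thesis unfolding h_def[abs_def] using True by simp
  next
    case False
    then show ?thesis unfolding h_def[abs_def] by simp
  qed
  have hint: "(\<integral>\<^sup>+x. h i x \<partial>lebesgue) \<le> c * (if i \<in> enc ` F then X i else 0)" for i
  proof (cases "i \<in> enc ` F")
    case True
    have QD: "Qf i \<in> D (tt (lev i))" by (rule encF[OF True])
    have Qd: "Qf i \<in> dyadic_cubes" by (rule D_dyadic[OF QD])
    have "(\<integral>\<^sup>+x. h i x \<partial>lebesgue) = c * ennreal (tt (lev i) powr q) * emeasure lebesgue (Qf i)"
      using True dyadic_sets[OF Qd] by (simp add: h_def nn_integral_cmult_indicator)
    also have "\<dots> = c * ennreal (tt (lev i) powr q * measure lebesgue (Qf i))"
      by (simp add: dyadic_emeasure[OF Qd] ennreal_mult mult.assoc)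
    also have "\<dots> \<le> c * X i"
    proof -
      have "tt (lev i) powr q \<le> V (Qf i) powr q"
        using D_V[OF QD] tt_pos q_pos by (intro powr_mono2) (auto simp: less_imp_le)
      then have "tt (lev i) powr q * measure lebesgue (Qf i) \<le> SR_term p q \<alpha> f (Qf i)"
        unfolding T_eq[OF Qd] using meas_pos[OF Qd] by (simp add: mult.commute)
      then show ?thesis unfolding X_def by (intro mult_left_mono ennreal_leI) auto
    qed
    finally show ?thesis using True by simp
  qed (simp add: h_def)
  have kf: "\<exists>i\<in>enc ` F. lev i = k \<and> x \<in> Qf i" if "ennreal (tt k) < ?Mx x" for k x
  proof -
    from that obtain P where P: "P \<in> dyadic_cubes" "x \<in> P" "ennreal (tt k) < ennreal (V P)"
      unfolding max_op_eq by (auto simp: less_SUP_iff)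
    then have "tt k < V P" using less_imp_le[OF tt_pos[of k]] by (simp add: ennreal_less_iff)
    then have "x \<in> Om (tt k)" using in_Om[OF P(1,2) tt_pos] by simp
    then obtain Q where Q: "Q \<in> D (tt k)" "x \<in> Q" by (auto simp: Om_def)
    then have z: "(k, Q) \<in> F" by (simp add: F_def)
    show ?thesis using dec_enc[OF z] z Q by (intro bexI[of _ "enc (k, Q)"]) (auto simp: lev_def Qf_def)
  qed
  have lowb: "(\<Sum>k\<in>K. c * ennreal (tt k powr q)) \<le> (\<Sum>i. h i x)"
    if K: "finite K" "\<forall>k\<in>K. ennreal (tt k) < ?Mx x" for K x
  proof -
    have "\<forall>k\<in>K. \<exists>i. i \<in> enc ` F \<and> lev i = k \<and> x \<in> Qf i"
    proof
      fix k assume "k \<in> K"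
      then have "ennreal (tt k) < ?Mx x" using K(2) by blast
      from kf[OF this] show "\<exists>i. i \<in> enc ` F \<and> lev i = k \<and> x \<in> Qf i" by blast
    qed
    then obtain \<iota> where \<iota>: "\<forall>k\<in>K. \<iota> k \<in> enc ` F \<and> lev (\<iota> k) = k \<and> x \<in> Qf (\<iota> k)"
      using bchoice[OF \<open>\<forall>k\<in>K. \<exists>i. i \<in> enc ` F \<and> lev i = k \<and> x \<in> Qf i\<close>] by blast
    have inj: "inj_on \<iota> K"
    proof (rule inj_onI)
      fix a b
      assume ab: "a \<in> K" "b \<in> K" "\<iota> a = \<iota> b"
      have "a = lev (\<iota> a)" using bspec[OF \<iota> ab(1)] by simp
      also have "\<dots> = lev (\<iota> b)" using ab(3) by (rule arg_cong)
      also have "\<dots> = b" using bspec[OF \<iota> ab(2)] by simp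
      finally show "a = b" .
    qed
    have "(\<Sum>k\<in>K. c * ennreal (tt k powr q)) = (\<Sum>k\<in>K. h (\<iota> k) x)"
    proof (rule sum.cong)
      fix k assume "k \<in> K"
      then have "\<iota> k \<in> enc ` F" "lev (\<iota> k) = k" "x \<in> Qf (\<iota> k)" using bspec[OF \<iota>] by simp_all
      then show "c * ennreal (tt k powr q) = h (\<iota> k) x" by (simp add: h_def)
    qed simp
    also have "\<dots> = (\<Sum>i\<in>\<iota> ` K. h i x)" by (simp add: sum.reindex[OF inj])
    also have "\<dots> \<le> (\<Sum>i. h i x)" using K(1) by (intro sum_le_suminf summableI finite_imageI zero_le)
    finally show ?thesis .
  qed
  have pw: "enn_powr (?Mx x) q \<le> (\<Sum>i. h i x)" for x
  proof (cases "?Mx x = \<infinity>")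
    case True
    have "(\<Sum>i. h i x) = \<infinity>"
    proof (rule ccontr)
      assume "(\<Sum>i. h i x) \<noteq> \<infinity>"
      then obtain s where s: "(\<Sum>i. h i x) = ennreal s" "0 \<le> s" by (cases "(\<Sum>i. h i x)" rule: ennreal_cases) auto
      define N where "N = nat \<lceil>s\<rceil>"
      have "(\<Sum>k\<in>{0..int N}. c * ennreal (tt k powr q)) \<le> (\<Sum>i. h i x)"
        using True by (intro lowb) auto
      moreover have "ennreal (real (N + 1)) \<le> (\<Sum>k\<in>{0..int N}. c * ennreal (tt k powr q))"
      proof -
        have one: "1 \<le> c * ennreal (tt k powr q)" if "0 \<le> k" for k
        proof -
          have "1 \<le> 2 powr q" using q_pos by (simp add: ge_one_powr_ge_zero)
          moreover have "1 \<le> tt k powr q" using that q_pos by (simp add: tt_def ge_one_powr_ge_zero)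
          ultimately have "1 * 1 \<le> 2 powr q * tt k powr q" by (intro mult_mono) auto
          then show ?thesis unfolding c_def by (simp add: ennreal_mult[symmetric] ennreal_leI del: ennreal_1)
        qed
        have "(\<Sum>k\<in>{0..int N}. (1::ennreal)) \<le> (\<Sum>k\<in>{0..int N}. c * ennreal (tt k powr q))"
          using one by (intro sum_mono) auto
        moreover have "(\<Sum>k\<in>{0..int N}. (1::ennreal)) = ennreal (real (N + 1))"
        proof -
          have "card {0..int N} = Suc N" by simp
          then have "(\<Sum>k\<in>{0..int N}. (1::ennreal)) = of_nat (Suc N)" by simp
          then show ?thesis by (simp add: ennreal_of_nat_eq_real_of_nat)
        qed
        ultimately show ?thesis by simp
      qed
      ultimately have "ennreal (real (N + 1)) \<le> ennreal s" using s by simp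
      then have "real (N + 1) \<le> s" by (simp only: ennreal_le_iff[OF s(2)])
      moreover have "s \<le> real N" unfolding N_def by linarith
      ultimately show False by simp
    qed
    then show ?thesis by simp
  next
    case False
    then obtain y where y: "?Mx x = ennreal y" "0 \<le> y" by (cases "?Mx x" rule: ennreal_cases) auto
    show ?thesis
    proof (cases "y = 0")
      case True
      then show ?thesis using y q_pos by (simp add: enn_powr_def)
    next
      case False
      then have y0: "0 < y" using y by simp
      define k0 where "k0 = \<lceil>log 2 y\<rceil> - 1"
      have l1: "real_of_int k0 < log 2 y" unfolding k0_def by linarith
      have l2: "log 2 y \<le> real_of_int (k0 + 1)" unfolding k0_def by simp
      have "tt k0 < y"
      proof -
        have "tt k0 < 2 powr (log 2 y)" unfolding tt_def using l1 by simp
        then show ?thesis using y0 by simp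
      qed
      then have lt: "ennreal (tt k0) < ?Mx x" using y less_imp_le[OF tt_pos[of k0]] by (simp add: ennreal_less_iff)
      have "y \<le> 2 * tt k0"
      proof -
        have "y = 2 powr (log 2 y)" using y0 by simp
        also have "\<dots> \<le> 2 powr real_of_int (k0 + 1)" using l2 by simp
        also have "\<dots> = 2 * tt k0" by (simp add: tt_def powr_add)
        finally show ?thesis .
      qed
      then have "y powr q \<le> (2 * tt k0) powr q" using y0 q_pos by (intro powr_mono2) auto
      also have "\<dots> = 2 powr q * tt k0 powr q" using tt_pos by (simp add: powr_mult)
      finally have "ennreal (y powr q) \<le> c * ennreal (tt k0 powr q)"
        unfolding c_def by (simp add: ennreal_mult[symmetric] ennreal_leI)
      also have "\<dots> = (\<Sum>k\<in>{k0}. c * ennreal (tt k powr q))" by simp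
      also have "\<dots> \<le> (\<Sum>i. h i x)" using lt by (intro lowb) auto
      finally show ?thesis using y by (simp add: enn_powr_def)
    qed
  qed
  have "(\<integral>\<^sup>+x. enn_powr (?Mx x) q \<partial>lebesgue) \<le> (\<integral>\<^sup>+x. (\<Sum>i. h i x) \<partial>lebesgue)"
    by (intro nn_integral_mono pw)
  also have "\<dots> = (\<Sum>i. \<integral>\<^sup>+x. h i x \<partial>lebesgue)" by (rule nn_integral_suminf[OF hm])
  also have "\<dots> \<le> (\<Sum>i. c * (if i \<in> enc ` F then X i else 0))" by (intro suminf_le hint) auto
  also have "\<dots> = c * (\<Sum>i. if i \<in> enc ` F then X i else 0)" by simp
  also have "\<dots> \<le> c * (of_nat M * B)" by (intro mult_left_mono sumX) auto
  also have "\<dots> < \<infinity>" using Bfin by (simp add: c_def ennreal_mult_less_top of_nat_less_top)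
  finally show ?thesis .
qed

end

lemma hard_dir:
  assumes "f \<in> SR_log p q \<alpha>"
  shows "f \<in> max_Lq (real CARD('n) * (1/p - 1/q)) \<alpha> q"
proof -
  define B where "B = (SUP (I, Q) \<in> {(I, Q). sparse I Q}. (\<Sum>i. if i \<in> I then ennreal (SR_term p q \<alpha> f (Q i)) else 0))"
  have Bfin: "B < \<infinity>" using assms unfolding SR_log_def B_def by blast
  have Bsp: "(\<Sum>i. if i \<in> I then ennreal (SR_term p q \<alpha> f (Q i)) else 0) \<le> B" if "sparse I Q" for I Q
  proof -
    have "(I, Q) \<in> {(I, Q). sparse I Q}" using that by simp
    then have "(case (I, Q) of (I, Q) \<Rightarrow> (\<Sum>i. if i \<in> I then ennreal (SR_term p q \<alpha> f (Q i)) else 0)) \<le> B"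
      unfolding B_def by (rule SUP_upper)
    then show ?thesis by simp
  qed
  have "(\<integral>\<^sup>+x. enn_powr (max_op (real CARD('n) * (1/p - 1/q)) \<alpha> f x) q \<partial>lebesgue) < \<infinity>"
    by (rule hard_main[OF Bfin Bsp])
  then show ?thesis using li unfolding max_Lq_def by blast
qed

end

theorem theorem3p6:
  fixes p q \<alpha> :: real
  assumes "1 \<le> p" "p \<le> q" "p = q \<longrightarrow> \<alpha> \<le> 0"
  shows "(SR_log p q \<alpha> :: (real^'n::finite \<Rightarrow> real) set)
           = max_Lq (real CARD('n) * (1/p - 1/q)) \<alpha> q"
proof (intro set_eqI iffI)
  fix f :: "real^'n \<Rightarrow> real"
  assume f: "f \<in> SR_log p q \<alpha>"
  then have "loc_integrable f" unfolding SR_log_def by blast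
  then show "f \<in> max_Lq (real CARD('n) * (1/p - 1/q)) \<alpha> q"
    using hard_dir[OF assms] f by blast
next
  fix f :: "real^'n \<Rightarrow> real"
  assume f: "f \<in> max_Lq (real CARD('n) * (1/p - 1/q)) \<alpha> q"
  then have "loc_integrable f" unfolding max_Lq_def by blast
  then show "f \<in> SR_log p q \<alpha>"
    using easy_dir[OF assms] f by blast
qed

end
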